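(* Let $G=(\mathcal V,\mathcal E,a)$ and $G'=(\mathcal V',\mathcal E',a')$ be finite undirected graphs with discrete node attributes. For any $u\in\mathcal V$, $u'\in\mathcal V'$ and any $k\ge0$ such that $\kappa^{(k)}_{\mathrm{walk}}(u,u)>0$ and $\kappa^{(k)}_{\mathrm{walk}}(u',u')>0$, $$d_{\kappa^{(k)}_{\mathrm{subtree}}}(u,u')\ \ge\ d_{\hat\kappa^{(k)}_{\mathrm{walk}}}(u,u').$$
   Context: $\mathcal N(u)$ denotes neighbors; $\delta$ is the Dirac kernel. Walks: $\mathcal W_k(G,u)$ is the set of sequences $(p_0=u,\dots,p_k)$ with consecutive nodes adjacent (repetitions allowed), $a(p)=(a(p_0),\dots,a(p_k))$. Walk kernel: $\kappa^{(k)}_{\mathrm{walk}}(u,u')=\sum_{p\in\mathcal W_k(G,u)}\sum_{p'\in\mathcal W_k(G',u')}\delta(a(p),a'(p'))$. The normalized kernel of $\kappa$ is $\hat\kappa(u,u')=\kappa(u,u')/\sqrt{\kappa(u,u)\kappa(u',u')}$. Weisfeiler–Lehman relabeling: $a_0=a$, $a_{i}(u)=f\big(a_{i-1}(u),\{\!\{a_{i-1}(v):v\in\mathcal N(u)\}\!\}\big)$ with $f$ injective and shared by both graphs; $\kappa^{(k)}_{\mathrm{subtree}}(u,u')=\delta(a_k(u),a'_k(u'))$. For a kernel $\kappa$, $d_\kappa(u,u')=\sqrt{\kappa(u,u)+\kappa(u',u')-2\kappa(u,u')}$ (the distance between feature-map images). *)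

theory Defs
  imports Complex_Main "HOL-Library.Multiset"
begin

definition undirected_graph :: "'v set \<Rightarrow> ('v \<Rightarrow> 'v \<Rightarrow> bool) \<Rightarrow> bool" where
  "undirected_graph V E \<longleftrightarrow> finite V \<and> (\<forall>x y. E x y \<longrightarrow> E y x) \<and>
     (\<forall>x y. E x y \<longrightarrow> x \<in> V \<and> y \<in> V)"

definition neighbors :: "'v set \<Rightarrow> ('v \<Rightarrow> 'v \<Rightarrow> bool) \<Rightarrow> 'v \<Rightarrow> 'v set" where
  "neighbors V E u = {v \<in> V. E u v}"

definition walks :: "'v set \<Rightarrow> ('v \<Rightarrow> 'v \<Rightarrow> bool) \<Rightarrow> 'v \<Rightarrow> nat \<Rightarrow> 'v list set" where
  "walks V E u k = {p. length p = Suc k \<and> p ! 0 = u \<and> set p \<subseteq> V \<and>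
                       (\<forall>i<k. E (p ! i) (p ! Suc i))}"

definition walk_kernel ::
  "'v set \<Rightarrow> ('v \<Rightarrow> 'v \<Rightarrow> bool) \<Rightarrow> ('v \<Rightarrow> 'c) \<Rightarrow>
   'w set \<Rightarrow> ('w \<Rightarrow> 'w \<Rightarrow> bool) \<Rightarrow> ('w \<Rightarrow> 'c) \<Rightarrow> nat \<Rightarrow> 'v \<Rightarrow> 'w \<Rightarrow> real" where
  "walk_kernel V E a V' E' a' k u u' =
     (\<Sum>p\<in>walks V E u k. \<Sum>p'\<in>walks V' E' u' k.
        (if map a p = map a' p' then 1 else 0))"

definition normalized :: "real \<Rightarrow> real \<Rightarrow> real \<Rightarrow> real" where
  "normalized kuu' kuu ku'u' = kuu' / sqrt (kuu * ku'u')"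

definition kernel_dist :: "real \<Rightarrow> real \<Rightarrow> real \<Rightarrow> real" where
  "kernel_dist kuu ku'u' kuu' = sqrt (kuu + ku'u' - 2 * kuu')"

fun wl :: "('c \<Rightarrow> 'c multiset \<Rightarrow> 'c) \<Rightarrow> 'v set \<Rightarrow> ('v \<Rightarrow> 'v \<Rightarrow> bool) \<Rightarrow> ('v \<Rightarrow> 'c)
           \<Rightarrow> nat \<Rightarrow> 'v \<Rightarrow> 'c" where
  "wl f V E a 0 u = a u"
| "wl f V E a (Suc i) u =
     f (wl f V E a i u) (image_mset (wl f V E a i) (mset_set (neighbors V E u)))"

definition subtree_kernel ::
  "('c \<Rightarrow> 'c multiset \<Rightarrow> 'c) \<Rightarrow>
   'v set \<Rightarrow> ('v \<Rightarrow> 'v \<Rightarrow> bool) \<Rightarrow> ('v \<Rightarrow> 'c) \<Rightarrow>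
   'w set \<Rightarrow> ('w \<Rightarrow> 'w \<Rightarrow> bool) \<Rightarrow> ('w \<Rightarrow> 'c) \<Rightarrow> nat \<Rightarrow> 'v \<Rightarrow> 'w \<Rightarrow> real" where
  "subtree_kernel f V E a V' E' a' k u u' =
     (if wl f V E a k u = wl f V' E' a' k u' then 1 else 0)"

end

theory Submission
  imports Defs
begin

lemma walks_Cons_iff:
  "u' # q \<in> walks V E u (Suc k) \<longleftrightarrow> u' = u \<and> u \<in> V \<and> q \<noteq> [] \<and> E u (hd q) \<and> q \<in> walks V E (hd q) k"
proof
  assume h: "u' # q \<in> walks V E u (Suc k)"
  have l: "length q = Suc k" and u0: "u' = u" and sV: "set (u' # q) \<subseteq> V"
    and e: "\<forall>i<Suc k. E ((u' # q) ! i) ((u' # q) ! Suc i)"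
    using h unfolding walks_def by auto
  have q: "q \<noteq> []" using l by auto
  have hq: "hd q = q ! 0" using q by (simp add: hd_conv_nth)
  have e0: "E u (hd q)" using spec[OF e, of 0] u0 hq by simp
  have ei: "\<forall>i<k. E (q ! i) (q ! Suc i)"
  proof (intro allI impI)
    fix i assume "i < k"
    then have "Suc i < Suc k" by simp
    then show "E (q ! i) (q ! Suc i)" using e by (metis nth_Cons_Suc)
  qed
  have "q \<in> walks V E (hd q) k" unfolding walks_def using l hq sV ei by simp
  then show "u' = u \<and> u \<in> V \<and> q \<noteq> [] \<and> E u (hd q) \<and> q \<in> walks V E (hd q) k"
    using u0 sV q e0 by simp
next
  assume h: "u' = u \<and> u \<in> V \<and> q \<noteq> [] \<and> E u (hd q) \<and> q \<in> walks V E (hd q) k"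
  then have l: "length q = Suc k" and hq: "q ! 0 = hd q" and sV: "set q \<subseteq> V"
    and ei: "\<forall>i<k. E (q ! i) (q ! Suc i)" unfolding walks_def by auto
  have e: "\<forall>i<Suc k. E ((u # q) ! i) ((u # q) ! Suc i)"
  proof (intro allI impI)
    fix i assume i: "i < Suc k"
    show "E ((u # q) ! i) ((u # q) ! Suc i)"
    proof (cases i)
      case 0 then show ?thesis using h hq by simp
    next
      case (Suc j) then show ?thesis using i ei by simp
    qed
  qed
  show "u' # q \<in> walks V E u (Suc k)" unfolding walks_def using h l sV e by simp
qed

lemma walks_nonempty: "p \<in> walks V E u k \<Longrightarrow> p = u # tl p"
  unfolding walks_def by (cases p) auto

lemma walks_finite: assumes "finite V" shows "finite (walks V E u k)"
proof -
  have "walks V E u k \<subseteq> {p. set p \<subseteq> V \<and> length p = Suc k}" by (auto simp: walks_def)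
  moreover have "finite {p. set p \<subseteq> V \<and> length p = Suc k}" using finite_lists_length_eq[OF assms] .
  ultimately show ?thesis by (rule finite_subset)
qed

definition cnt :: "'v set \<Rightarrow> ('v \<Rightarrow> 'v \<Rightarrow> bool) \<Rightarrow> ('v \<Rightarrow> 'c) \<Rightarrow> 'v \<Rightarrow> nat \<Rightarrow> 'c list \<Rightarrow> nat" where
  "cnt V E a u k s = card {p \<in> walks V E u k. map a p = s}"

lemma cnt_0: "u \<in> V \<Longrightarrow> cnt V E a u 0 s = (if s = [a u] then 1 else 0)"
proof -
  assume u: "u \<in> V"
  have W: "walks V E u 0 = {[u]}"
  proof (rule set_eqI, rule iffI)
    fix p assume "p \<in> walks V E u 0"
    then have l: "length p = Suc 0" and h: "p ! 0 = u" unfolding walks_def by simp_all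
    from l obtain x where "p = [x]" by (metis length_0_conv length_Suc_conv)
    with h show "p \<in> {[u]}" by simp
  next
    fix p assume "p \<in> {[u]}"
    then show "p \<in> walks V E u 0" using u unfolding walks_def by simp
  qed
  show ?thesis
  proof (cases "s = [a u]")
    case True
    have "{p \<in> walks V E u 0. map a p = s} = {[u]}" unfolding W using True by auto
    then show ?thesis using True unfolding cnt_def by simp
  next
    case False
    have e: "{p \<in> walks V E u 0. map a p = s} = {}" unfolding W using False by auto
    show ?thesis using False unfolding cnt_def e by simp
  qed
qed

lemma cnt_Suc:
  assumes G: "undirected_graph V E" and u: "u \<in> V"
  shows "cnt V E a u (Suc k) s = (case s of [] \<Rightarrow> 0 | c0 # t \<Rightarrow>
     (if a u = c0 then (\<Sum>v\<in>neighbors V E u. cnt V E a v k t) else 0))"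
proof (cases s)
  case Nil
  then show ?thesis by (auto simp: cnt_def walks_def)
next
  case (Cons c0 t)
  have fin: "finite V" using G by (simp add: undirected_graph_def)
  have EV: "\<And>x y. E x y \<Longrightarrow> y \<in> V" using G by (simp add: undirected_graph_def)
  show ?thesis
  proof (cases "a u = c0")
    case False
    have "{p \<in> walks V E u (Suc k). map a p = s} = {}"
      using False Cons by (auto dest!: walks_nonempty)
    then have "cnt V E a u (Suc k) s = 0" unfolding cnt_def by (simp only: card.empty)
    then show ?thesis using False Cons by simp
  next
    case True
    have eq: "{p \<in> walks V E u (Suc k). map a p = s} =
      (\<Union>v\<in>neighbors V E u. (\<lambda>q. u # q) ` {q \<in> walks V E v k. map a q = t})"
    proof (rule set_eqI, rule iffI)
      fix p assume "p \<in> {p \<in> walks V E u (Suc k). map a p = s}"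
      then have p: "p \<in> walks V E u (Suc k)" "map a p = s" by auto
      have pe: "p = u # tl p" using walks_nonempty[OF p(1)] .
      then have "u # tl p \<in> walks V E u (Suc k)" using p by simp
      then have w: "tl p \<noteq> [] \<and> E u (hd (tl p)) \<and> tl p \<in> walks V E (hd (tl p)) k"
        using walks_Cons_iff by metis
      have "map a (tl p) = t" using p(2) Cons pe by (metis list.inject list.simps(9))
      then show "p \<in> (\<Union>v\<in>neighbors V E u. (\<lambda>q. u # q) ` {q \<in> walks V E v k. map a q = t})"
        using w pe EV by (auto simp: neighbors_def intro!: bexI[of _ "hd (tl p)"] image_eqI[of _ _ "tl p"])
    next
      fix p assume "p \<in> (\<Union>v\<in>neighbors V E u. (\<lambda>q. u # q) ` {q \<in> walks V E v k. map a q = t})"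
      then obtain v q where v: "v \<in> neighbors V E u" and q: "q \<in> walks V E v k" "map a q = t" and pq: "p = u # q"
        by auto
      have "hd q = v" using walks_nonempty[OF q(1)] by (metis list.sel(1))
      moreover have "q \<noteq> []" using walks_nonempty[OF q(1)] by auto
      ultimately have "u # q \<in> walks V E u (Suc k)" using walks_Cons_iff[of u q V E u k] u v q
        by (auto simp: neighbors_def)
      then show "p \<in> {p \<in> walks V E u (Suc k). map a p = s}" using pq q True Cons by auto
    qed
    have "card (\<Union>v\<in>neighbors V E u. (\<lambda>q. u # q) ` {q \<in> walks V E v k. map a q = t})
        = (\<Sum>v\<in>neighbors V E u. card ((\<lambda>q. u # q) ` {q \<in> walks V E v k. map a q = t}))"
    proof (rule card_UN_disjoint)
      show "finite (neighbors V E u)" using fin by (simp add: neighbors_def)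
      show "\<forall>i\<in>neighbors V E u. finite ((\<lambda>q. u # q) ` {q \<in> walks V E i k. map a q = t})"
        using walks_finite[OF fin] by auto
      show "\<forall>i\<in>neighbors V E u. \<forall>j\<in>neighbors V E u. i \<noteq> j \<longrightarrow>
        (\<lambda>q. u # q) ` {q \<in> walks V E i k. map a q = t} \<inter> (\<lambda>q. u # q) ` {q \<in> walks V E j k. map a q = t} = {}"
        by (auto dest!: walks_nonempty) (metis list.inject)
    qed
    also have "\<dots> = (\<Sum>v\<in>neighbors V E u. cnt V E a v k t)"
      by (rule sum.cong) (auto simp: cnt_def card_image)
    finally have "cnt V E a u (Suc k) s = (\<Sum>v\<in>neighbors V E u. cnt V E a v k t)"
      unfolding cnt_def eq .
    then show ?thesis using True Cons by simp
  qed
qed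

fun L :: "('c \<Rightarrow> 'c \<times> 'c multiset) \<Rightarrow> nat \<Rightarrow> 'c \<Rightarrow> 'c" where
  "L g 0 c = c"
| "L g (Suc k) c = L g k (fst (g c))"

fun Phi :: "('c \<Rightarrow> 'c \<times> 'c multiset) \<Rightarrow> nat \<Rightarrow> 'c \<Rightarrow> 'c list \<Rightarrow> nat" where
  "Phi g 0 c s = (if s = [c] then 1 else 0)"
| "Phi g (Suc k) c s = (case s of [] \<Rightarrow> 0 | c0 # t \<Rightarrow>
     (if L g k (fst (g c)) = c0 then sum_mset (image_mset (\<lambda>d. Phi g k d t) (snd (g c))) else 0))"

lemma L_wl:
  assumes g: "\<And>x M. g (f x M) = (x, M)"
  shows "L g k (wl f V E a k u) = a u"
  by (induction k arbitrary: u) (simp_all add: g)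

lemma cnt_Phi:
  assumes G: "undirected_graph V E" and g: "\<And>x M. g (f x M) = (x, M)"
  shows "u \<in> V \<Longrightarrow> cnt V E a u k s = Phi g k (wl f V E a k u) s"
proof (induction k arbitrary: u s)
  case 0
  then show ?case by (simp add: cnt_0)
next
  case (Suc k)
  have NV: "neighbors V E u \<subseteq> V" by (auto simp: neighbors_def)
  show ?case
  proof (cases s)
    case Nil
    then show ?thesis using cnt_Suc[OF G Suc.prems, of a k s] by simp
  next
    case (Cons c0 t)
    have "(\<Sum>v\<in>neighbors V E u. cnt V E a v k t) = (\<Sum>v\<in>neighbors V E u. Phi g k (wl f V E a k v) t)"
      using Suc.IH NV by (intro sum.cong) auto
    also have "\<dots> = sum_mset (image_mset (\<lambda>d. Phi g k d t) (image_mset (wl f V E a k) (mset_set (neighbors V E u))))"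
      by (simp add: sum_unfold_sum_mset image_mset.compositionality o_def)
    finally show ?thesis using cnt_Suc[OF G Suc.prems, of a k s] Cons
      by (simp add: g L_wl[OF g])
  qed
qed

lemma sum_ind: "finite A \<Longrightarrow> (\<Sum>x\<in>A. if P x then 1 else 0 :: real) = real (card {x\<in>A. P x})"
  by (simp add: sum.inter_filter[symmetric])

lemma wk_left: assumes "finite V'" shows
  "walk_kernel V E a V' E' a' k u u' = (\<Sum>p\<in>walks V E u k. real (cnt V' E' a' u' k (map a p)))"
  unfolding walk_kernel_def cnt_def
  by (intro sum.cong refl) (simp add: sum_ind walks_finite[OF assms] eq_commute)

lemma wk_right: assumes "finite V" shows
  "walk_kernel V E a V' E' a' k u u' = (\<Sum>p'\<in>walks V' E' u' k. real (cnt V E a u k (map a' p')))"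
  unfolding walk_kernel_def cnt_def
  by (subst sum.swap) (intro sum.cong refl, simp add: sum_ind walks_finite[OF assms])

lemma wk_nonneg: "walk_kernel V E a V' E' a' k u u' \<ge> 0"
  unfolding walk_kernel_def by (intro sum_nonneg) auto

theorem corollary1:
  fixes V :: "'v set" and E :: "'v \<Rightarrow> 'v \<Rightarrow> bool" and a :: "'v \<Rightarrow> 'c"
    and V' :: "'w set" and E' :: "'w \<Rightarrow> 'w \<Rightarrow> bool" and a' :: "'w \<Rightarrow> 'c"
    and f :: "'c \<Rightarrow> 'c multiset \<Rightarrow> 'c" and k :: nat and u :: 'v and u' :: 'w
  assumes G: "undirected_graph V E" and G': "undirected_graph V' E'"
    and f_inj: "inj (\<lambda>(x, M). f x M)"
    and u: "u \<in> V" and u': "u' \<in> V'"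
    and pos: "walk_kernel V E a V E a k u u > 0"
    and pos': "walk_kernel V' E' a' V' E' a' k u' u' > 0"
  shows "kernel_dist (subtree_kernel f V E a V E a k u u)
                     (subtree_kernel f V' E' a' V' E' a' k u' u')
                     (subtree_kernel f V E a V' E' a' k u u')
         \<ge> kernel_dist
             (normalized (walk_kernel V E a V E a k u u)
                (walk_kernel V E a V E a k u u) (walk_kernel V E a V E a k u u))
             (normalized (walk_kernel V' E' a' V' E' a' k u' u')
                (walk_kernel V' E' a' V' E' a' k u' u') (walk_kernel V' E' a' V' E' a' k u' u'))
             (normalized (walk_kernel V E a V' E' a' k u u')
                (walk_kernel V E a V E a k u u) (walk_kernel V' E' a' V' E' a' k u' u'))"
  proof -
  define g where "g = inv (\<lambda>(x, M). f x M)"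
  have g: "\<And>x M. g (f x M) = (x, M)"
  proof -
    fix x M
    have "g ((\<lambda>(x, M). f x M) (x, M)) = (x, M)" unfolding g_def by (rule inv_f_f[OF f_inj])
    then show "g (f x M) = (x, M)" by simp
  qed
  have finV: "finite V" and finV': "finite V'" using G G' by (auto simp: undirected_graph_def)
  define K where "K = walk_kernel V E a V E a k u u"
  define K' where "K' = walk_kernel V' E' a' V' E' a' k u' u'"
  define X where "X = walk_kernel V E a V' E' a' k u u'"
  have Kp: "K > 0" and K'p: "K' > 0" using pos pos' by (auto simp: K_def K'_def)
  have X0: "X \<ge> 0" unfolding X_def by (rule wk_nonneg)
  have n1: "normalized K K K = 1" using Kp by (simp add: normalized_def real_sqrt_mult_self)
  have n2: "normalized K' K' K' = 1" using K'p by (simp add: normalized_def real_sqrt_mult_self)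
  have s1: "subtree_kernel f V E a V E a k u u = 1" by (simp add: subtree_kernel_def)
  have s2: "subtree_kernel f V' E' a' V' E' a' k u' u' = 1" by (simp add: subtree_kernel_def)
  show ?thesis
    unfolding s1 s2 K_def[symmetric] K'_def[symmetric] X_def[symmetric] n1 n2
  proof (cases "wl f V E a k u = wl f V' E' a' k u'")
    case True
    have c: "\<And>s. cnt V' E' a' u' k s = cnt V E a u k s"
      using cnt_Phi[OF G g u] cnt_Phi[OF G' g u'] True by simp
    have "X = K" unfolding X_def K_def wk_left[OF finV'] wk_left[OF finV] c ..
    moreover have "X = K'" unfolding X_def K'_def wk_right[OF finV] wk_right[OF finV'] c ..
    ultimately have nx: "normalized X K K' = 1" using n1 by simp
    have st: "subtree_kernel f V E a V' E' a' k u u' = 1" using True by (simp add: subtree_kernel_def)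
    show "kernel_dist 1 1 (subtree_kernel f V E a V' E' a' k u u') \<ge> kernel_dist 1 1 (normalized X K K')"
      unfolding nx st by (rule order_refl)
  next
    case False
    have st: "subtree_kernel f V E a V' E' a' k u u' = 0" using False by (simp add: subtree_kernel_def)
    have "normalized X K K' \<ge> 0" using X0 Kp K'p by (simp add: normalized_def)
    then have "sqrt (1 + 1 - 2 * normalized X K K') \<le> sqrt (1 + 1 - 2 * 0)"
      by (intro real_sqrt_le_mono) simp
    then show "kernel_dist 1 1 (subtree_kernel f V E a V' E' a' k u u') \<ge> kernel_dist 1 1 (normalized X K K')"
      unfolding st kernel_dist_def .
  qed
qed

end
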